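(* Let $A$ be a real $m\times n$ matrix with $r:=\operatorname{rank}(A)<n$, $k:=n-r$, $\beta\in\mathbb R_m$, $y\in\mathbb R_n$ with $Ay^T=\beta^T$, and $F\in S(A,\beta)$. Let $(x_1^T,\dots,x_k^T)$ be a basis of $\ker(A)$, $X$ the $k\times n$ matrix with rows $x_1,\dots,x_k$, $\pi_s(u):=u^{x_s}$ for $u\in\mathbb R_n^+$, $\psi(w):=\exp(X^\dagger\log(w)^T)$ and $G(w):=F(\psi(w))/\psi(w)^y$ for $w\in\mathbb R_k^+$. Then $F(v)=G(\pi_1(v),\dots,\pi_k(v))v^y$ for all $v\in\mathbb R_n^+$, and $G$ is the unique function $H:\mathbb R_k^+\to\mathbb R$ such that $F(v)=H(\pi_1(v),\dots,\pi_k(v))v^y$ for every $v\in\mathbb R_n^+$.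
   Context: $\mathbb R_m$ denotes real row vectors of length $m$, $\mathbb R_m^+$ those with all entries strictly positive (similarly for $n,k$). For $c\in\mathbb R_m^+$, $\alpha\in\mathbb R_m$, $c^\alpha:=\prod_i c_i^{\alpha_i}$. For positive row vector $w$, $\log(w)$ is taken entrywise (as a row vector); for a column vector $z$, $\exp(z)$ is the row vector of entrywise exponentials. $B^\dagger$ is the Moore–Penrose pseudoinverse. For a real $m\times n$ matrix $A$ with columns $\alpha_1^T,\dots,\alpha_n^T$ and $\beta\in\mathbb R_m$, $S(A,\beta)$ is the set of all $F:\mathbb R_n^+\to\mathbb R$ with $F(v_1c^{\alpha_1},\dots,v_nc^{\alpha_n})=F(v_1,\dots,v_n)c^\beta$ for all $v_1,\dots,v_n>0$ and all $c\in\mathbb R_m^+$. *)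

theory Defs
  imports "HOL-Analysis.Analysis"
begin

definition pos_vec :: "real^'n \<Rightarrow> bool" where
  "pos_vec v \<longleftrightarrow> (\<forall>i. 0 < v $ i)"

definition vpow :: "real^'n \<Rightarrow> real^'n \<Rightarrow> real" where
  "vpow c \<alpha> = (\<Prod>i\<in>UNIV. (c $ i) powr (\<alpha> $ i))"

definition S_class :: "real^'n^'m \<Rightarrow> real^'m \<Rightarrow> (real^'n \<Rightarrow> real) set" where
  "S_class A \<beta> = {F. \<forall>v c. pos_vec v \<longrightarrow> pos_vec c \<longrightarrow>
      F (\<chi> j. v $ j * vpow c (column j A)) = F v * vpow c \<beta>}"

definition pinv :: "real^'n^'m \<Rightarrow> real^'m^'n" where
  "pinv B = (THE P. B ** P ** B = B \<and> P ** B ** P = P \<and>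
       transpose (B ** P) = B ** P \<and> transpose (P ** B) = P ** B)"

end

theory Submission imports Defs begin

lemma transpose_ind_zero:
  fixes X :: "real^'n^'k"
  assumes X_inj: "inj (\<lambda>s. row s X)" and X_indep: "independent (rows X)"
    and z: "transpose X *v z = 0"
  shows "z = 0"
proof -
  have s: "(\<Sum>i\<in>UNIV. z$i *\<^sub>R row i X) = 0"
    using z by (simp add: matrix_mult_sum scalar_mult_eq_scaleR)
  have rX: "rows X = range (\<lambda>s. row s X)" by (auto simp: rows_def)
  define c where "c = (\<lambda>r. z $ (inv (\<lambda>s. row s X) r))"
  have "(\<Sum>r\<in>rows X. c r *\<^sub>R r) = (\<Sum>i\<in>UNIV. c (row i X) *\<^sub>R row i X)"
    unfolding rX by (rule sum.reindex[OF X_inj, unfolded comp_def])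
  also have "\<dots> = 0" using s by (simp add: c_def inv_f_f[OF X_inj])
  finally have "\<forall>r\<in>rows X. c r = 0"
    using X_indep real_vector.dependent_finite[of "rows X"] unfolding rX by auto
  then show ?thesis unfolding rX c_def
    by (auto simp: inv_f_f[OF X_inj] vec_eq_iff)
qed

lemma pinv_right:
  fixes X :: "real^'n^'k"
  assumes X_inj: "inj (\<lambda>s. row s X)" and X_indep: "independent (rows X)"
  shows "X ** pinv X = mat 1"
proof -
  define M where "M = X ** transpose X"
  have ker: "z = 0" if "M *v z = 0" for z
  proof -
    have "z \<bullet> (M *v z) = (transpose X *v z) \<bullet> (transpose X *v z)"
      unfolding M_def
      by (simp add: matrix_vector_mul_assoc[symmetric] dot_lmul_matrix)
    then have "transpose X *v z = 0" using that by simp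
    then show ?thesis using transpose_ind_zero[OF X_inj X_indep] by blast
  qed
  then obtain N where NM: "N ** M = mat 1"
    using matrix_left_invertible_ker by blast
  then have MN: "M ** N = mat 1" using matrix_left_right_inverse by blast
  have Msym: "transpose M = M" unfolding M_def by (simp add: matrix_transpose_mul)
  have "transpose N ** M = mat 1"
    using MN by (metis Msym matrix_transpose_mul transpose_mat)
  then have Nsym: "transpose N = N"
    by (metis MN matrix_mul_assoc matrix_mul_lid matrix_mul_rid)
  define P where "P = transpose X ** N"
  have XP: "X ** P = mat 1" unfolding P_def using MN M_def by (simp add: matrix_mul_assoc)
  have PXs: "transpose (P ** X) = P ** X"
    unfolding P_def by (simp add: matrix_transpose_mul Nsym matrix_mul_assoc)
  have c1: "X ** P ** X = X" using XP by simp
  have c2: "P ** X ** P = P" using XP by (simp add: matrix_mul_assoc[symmetric])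
  have c3: "transpose (X ** P) = X ** P" using XP by simp
  have uniq: "Q = P" if q1: "X ** Q ** X = X" and q2: "Q ** X ** Q = Q"
     and q4: "transpose (Q ** X) = Q ** X" for Q
  proof -
    have "X ** Q = X ** Q ** (X ** P)" using XP by simp
    also have "\<dots> = (X ** Q ** X) ** P" by (simp add: matrix_mul_assoc)
    finally have XQ: "X ** Q = mat 1" using q1 XP by simp
    have "transpose X = transpose (X ** (P ** X))" using c1 by (simp add: matrix_mul_assoc)
    also have "\<dots> = transpose (P ** X) ** transpose X" by (simp add: matrix_transpose_mul)
    finally have tX: "transpose X = P ** X ** transpose X" using PXs by simp
    have "Q ** X = transpose X ** transpose Q"
      by (metis q4 matrix_transpose_mul)
    also have "\<dots> = P ** X ** (transpose X ** transpose Q)"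
      by (metis tX matrix_mul_assoc)
    also have "\<dots> = P ** X ** (Q ** X)"
      by (metis q4 matrix_transpose_mul)
    also have "\<dots> = P ** (X ** Q) ** X"
      by (simp add: matrix_mul_assoc)
    also have "\<dots> = P ** X" using XQ by simp
    finally have QX: "Q ** X = P ** X" .
    have "Q = Q ** X ** Q" using q2 by simp
    also have "\<dots> = P ** (X ** Q)" using QX by (simp add: matrix_mul_assoc)
    finally show ?thesis using XQ by simp
  qed
  have "pinv X = P"
    unfolding pinv_def
  proof (rule the_equality)
    show "X ** P ** X = X \<and> P ** X ** P = P \<and> transpose (X ** P) = X ** P \<and> transpose (P ** X) = P ** X"
      using c1 c2 c3 PXs by (intro conjI)
  next
    fix Q assume "X ** Q ** X = X \<and> Q ** X ** Q = Q \<and> transpose (X ** Q) = X ** Q \<and> transpose (Q ** X) = Q ** X"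
    then show "Q = P" using uniq by (elim conjE)
  qed
  then show ?thesis using XP by simp
qed

lemma ker_perp:
  fixes A :: "real^'n^'m" and X :: "real^'n^'k"
  assumes X_span: "span (rows X) = {v. A *v v = 0}"
    and t: "X *v t = 0"
  shows "\<exists>z. t = transpose A *v z"
proof -
  define S where "S = range (\<lambda>z. transpose A *v z)"
  have subS: "subspace S" unfolding S_def
    using linear_subspace_image[OF matrix_vector_mul_linear subspace_UNIV, of "transpose A"] by simp
  obtain p q where p: "p \<in> span S" and q: "\<And>w. w \<in> span S \<Longrightarrow> orthogonal q w" and tpq: "t = p + q"
    using orthogonal_subspace_decomp_exists[of S t] by metis
  have "q \<bullet> (transpose A *v z) = 0" for z
    using q[of "transpose A *v z"] by (auto simp: S_def span_base orthogonal_def)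
  then have "(A *v q) \<bullet> (A *v q) = 0"
    by (metis dot_lmul_matrix inner_commute transpose_matrix_vector)
  then have "A *v q = 0" by simp
  then have qin: "q \<in> span (rows X)" using X_span by simp
  have "orthogonal t r" if rr: "r \<in> rows X" for r
  proof -
    obtain s where "r = row s X" using rr unfolding rows_def by blast
    moreover have "(X *v t) $ s = 0" using t by simp
    ultimately show ?thesis
      by (simp add: matrix_vector_mul_component orthogonal_def row_def inner_commute)
  qed
  then have "orthogonal t q" using orthogonal_to_span[OF qin] by blast
  moreover have "orthogonal q p" using q p by blast
  ultimately have "q \<bullet> q = 0" using tpq
    by (simp add: orthogonal_def inner_add_left inner_add_right inner_commute)
  then have "t = p" using tpq by simp
  then have "t \<in> S" using p subS span_eq_iff by blast
  then show ?thesis unfolding S_def by blast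
qed

definition lnv :: "real^'n \<Rightarrow> real^'n" where "lnv c = (\<chi> i. ln (c $ i))"
definition expv :: "real^'n \<Rightarrow> real^'n" where "expv x = (\<chi> i. exp (x $ i))"

lemma vpow_expv: "vpow (expv x) a = exp (a \<bullet> x)"
  by (simp add: vpow_def expv_def powr_def inner_vec_def exp_sum mult.commute)

lemma pos_expv: "pos_vec (expv x)" by (simp add: pos_vec_def expv_def)
lemma lnv_expv[simp]: "lnv (expv x) = x" by (simp add: lnv_def expv_def)
lemma expv_lnv: "pos_vec c \<Longrightarrow> expv (lnv c) = c"
  by (simp add: pos_vec_def lnv_def expv_def vec_eq_iff)

lemma vpow_pos: "pos_vec c \<Longrightarrow> vpow c a = exp (a \<bullet> lnv c)"
  by (metis expv_lnv vpow_expv)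

theorem mainTheorem5:
  fixes A :: "real^'n^'m" and \<beta> :: "real^'m" and y :: "real^'n"
    and F :: "real^'n \<Rightarrow> real" and X :: "real^'n^'k"
  assumes rank_lt: "rank A < CARD('n)"
    and k_def: "CARD('k) = CARD('n) - rank A"
    and y_sol: "A *v y = \<beta>"
    and F_S: "F \<in> S_class A \<beta>"
    and X_inj: "inj (\<lambda>s. row s X)"
    and X_indep: "independent (rows X)"
    and X_span: "span (rows X) = {v. A *v v = 0}"
  defines "\<pi> \<equiv> (\<lambda>u::real^'n. \<chi> s::'k. vpow u (row s X))"
    and "G \<equiv> (\<lambda>w::real^'k.
           F (\<chi> j::'n. exp ((pinv X *v (\<chi> s. ln (w $ s))) $ j)) /
           vpow (\<chi> j::'n. exp ((pinv X *v (\<chi> s. ln (w $ s))) $ j)) y)"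
  shows "(\<forall>v. pos_vec v \<longrightarrow> F v = G (\<pi> v) * vpow v y) \<and>
         (\<forall>H :: real^'k \<Rightarrow> real.
            (\<forall>v. pos_vec v \<longrightarrow> F v = H (\<pi> v) * vpow v y) \<longrightarrow>
            (\<forall>w. pos_vec w \<longrightarrow> H w = G w))"
proof -
  define P where "P = pinv X"
  have XP: "X ** P = mat 1" unfolding P_def using pinv_right[OF X_inj X_indep] .
  have G_eq: "G w = F (expv (P *v lnv w)) / vpow (expv (P *v lnv w)) y" for w
    by (simp add: G_def expv_def lnv_def P_def)
  have pi_eq: "\<pi> u = expv (X *v lnv u)" if "pos_vec u" for u
    using that by (simp add: \<pi>_def expv_def vpow_pos matrix_vector_mul_component row_def vec_eq_iff)
  have piP: "\<pi> (expv (P *v a)) = expv a" for a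
  proof -
    have "\<pi> (expv (P *v a)) = expv ((X ** P) *v a)"
      using pi_eq[OF pos_expv] by (simp add: matrix_vector_mul_assoc)
    then show ?thesis using XP by simp
  qed
  have part1: "F v = G (\<pi> v) * vpow v y" if v: "pos_vec v" for v
  proof -
    define a where "a = lnv v"
    define b where "b = P *v (X *v a)"
    define u where "u = expv b"
    have Gpi: "G (\<pi> v) = F u / vpow u y"
      using G_eq pi_eq[OF v] by (simp add: u_def b_def a_def)
    define t where "t = a - b"
    have "X *v b = (X ** P) *v (X *v a)" unfolding b_def by (rule matrix_vector_mul_assoc)
    then have "X *v b = X *v a" using XP by simp
    then have "X *v t = 0"
      by (simp add: t_def matrix_vector_mult_diff_distrib)
    then obtain z where tz: "t = transpose A *v z" using ker_perp[OF X_span] by blast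
    define c where "c = expv z"
    have colA: "column j A \<bullet> z = t $ j" for j
      by (simp add: tz matrix_vector_mul_component column_def transpose_def)
    have vrep: "(\<chi> j. u $ j * vpow c (column j A)) = v"
    proof -
      have "u $ j * vpow c (column j A) = v $ j" for j
      proof -
        have "vpow c (column j A) = exp (t $ j)" by (simp add: c_def vpow_expv colA)
        then have "u $ j * vpow c (column j A) = exp (b $ j) * exp (t $ j)"
          by (simp add: u_def expv_def)
        also have "\<dots> = exp (a $ j)" by (simp add: t_def flip: exp_add)
        also have "\<dots> = v $ j" using v by (simp add: a_def lnv_def pos_vec_def)
        finally show ?thesis .
      qed
      then show ?thesis by (simp add: vec_eq_iff)
    qed
    have Fv: "F v = F u * vpow c \<beta>"
      using F_S pos_expv[of b] pos_expv[of z] vrep unfolding S_class_def u_def c_def by force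
    have yt: "y \<bullet> t = \<beta> \<bullet> z"
      by (metis tz y_sol dot_lmul_matrix inner_commute transpose_matrix_vector)
    have "vpow v y = exp (y \<bullet> a)" using v by (simp add: vpow_pos a_def)
    also have "\<dots> = exp (y \<bullet> b) * exp (y \<bullet> t)"
      by (simp add: t_def inner_diff_right flip: exp_add)
    also have "\<dots> = vpow u y * vpow c \<beta>"
      by (simp add: u_def c_def vpow_expv yt)
    finally have vy: "vpow v y = vpow u y * vpow c \<beta>" .
    have "vpow u y > 0" by (simp add: u_def vpow_expv)
    then show ?thesis using Fv vy Gpi by simp
  qed
  have part2: "H w = G w" if H: "\<forall>v. pos_vec v \<longrightarrow> F v = H (\<pi> v) * vpow v y"
     and w: "pos_vec w" for H w
  proof -
    define v where "v = expv (P *v lnv w)"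
    have "\<pi> v = w" using piP expv_lnv[OF w] by (simp add: v_def)
    moreover have "pos_vec v" using pos_expv by (simp add: v_def)
    ultimately have "F v = H w * vpow v y" using H by metis
    moreover have "vpow v y > 0" by (simp add: v_def vpow_expv)
    ultimately show ?thesis using G_eq by (simp add: v_def)
  qed
  show ?thesis using part1 part2 by blast
qed

end
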